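(* Let $k\in\mathbb{N}$ and let $\phi:\mathbb{M}_n\to\mathbb{M}_m$ be a $(k+1)$-positive linear map. Then $\mathrm{id}_k\otimes\phi:\mathbb{M}_k\otimes\mathbb{M}_n\to\mathbb{M}_k\otimes\mathbb{M}_m$ is a generalized Schwarz map.
   Context: $\mathbb{M}_n$ denotes the $n\times n$ complex matrices; $\mathrm{id}_k$ is the identity map on $\mathbb{M}_k$, and $\mathbb{M}_k\otimes\mathbb{M}_n\cong\mathbb{M}_{kn}$. A linear map $\phi$ is $j$-positive if $\mathrm{id}_j\otimes\phi$ maps positive semidefinite matrices to positive semidefinite matrices. A linear map $\psi:\mathbb{M}_N\to\mathbb{M}_M$ is a generalized Schwarz map if for all $K\in\mathbb{M}_N$ the block matrix $\begin{pmatrix}\psi(\mathbf{1}_N) & \psi(K)\\ \psi(K)^* & \psi(K^*K)\end{pmatrix}$ is positive semidefinite. *)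

theory Defs
  imports "Jordan_Normal_Form.Matrix"
begin

definition cadj :: "complex mat \<Rightarrow> complex mat" where
  "cadj A = mat (dim_col A) (dim_row A) (\<lambda>(i,j). cnj (A $$ (j,i)))"

definition psd :: "nat \<Rightarrow> complex mat \<Rightarrow> bool" where
  "psd n A \<longleftrightarrow> A \<in> carrier_mat n n \<and>
     (\<forall>v :: nat \<Rightarrow> complex.
        (\<Sum>i<n. \<Sum>j<n. cnj (v i) * A $$ (i,j) * v j) \<in> \<real> \<and>
        Re (\<Sum>i<n. \<Sum>j<n. cnj (v i) * A $$ (i,j) * v j) \<ge> 0)"

definition lin_map :: "nat \<Rightarrow> nat \<Rightarrow> (complex mat \<Rightarrow> complex mat) \<Rightarrow> bool" where
  "lin_map n m \<phi> \<longleftrightarrow>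
     (\<forall>A \<in> carrier_mat n n. \<phi> A \<in> carrier_mat m m) \<and>
     (\<forall>A \<in> carrier_mat n n. \<forall>B \<in> carrier_mat n n. \<phi> (A + B) = \<phi> A + \<phi> B) \<and>
     (\<forall>c. \<forall>A \<in> carrier_mat n n. \<phi> (c \<cdot>\<^sub>m A) = c \<cdot>\<^sub>m \<phi> A)"

text \<open>Block (a,b) of size n x n of a matrix in M_k (x) M_n = M_{kn}
  (Kronecker convention: index (a,i) corresponds to a*n+i).\<close>
definition blk :: "nat \<Rightarrow> complex mat \<Rightarrow> nat \<Rightarrow> nat \<Rightarrow> complex mat" where
  "blk n X a b = mat n n (\<lambda>(i,j). X $$ (a*n+i, b*n+j))"

text \<open>id_k (x) phi : M_k (x) M_n -> M_k (x) M_m, applying phi blockwise.\<close>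
definition ampl :: "nat \<Rightarrow> nat \<Rightarrow> nat \<Rightarrow> (complex mat \<Rightarrow> complex mat) \<Rightarrow> complex mat \<Rightarrow> complex mat" where
  "ampl k n m \<phi> X = mat (k*m) (k*m)
     (\<lambda>(p,q). \<phi> (blk n X (p div m) (q div m)) $$ (p mod m, q mod m))"

definition j_positive :: "nat \<Rightarrow> nat \<Rightarrow> nat \<Rightarrow> (complex mat \<Rightarrow> complex mat) \<Rightarrow> bool" where
  "j_positive j n m \<phi> \<longleftrightarrow>
     (\<forall>X \<in> carrier_mat (j*n) (j*n). psd (j*n) X \<longrightarrow> psd (j*m) (ampl j n m \<phi> X))"

definition gen_schwarz :: "nat \<Rightarrow> nat \<Rightarrow> (complex mat \<Rightarrow> complex mat) \<Rightarrow> bool" where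
  "gen_schwarz N M \<psi> \<longleftrightarrow>
     (\<forall>K \<in> carrier_mat N N.
        psd (2*M) (four_block_mat (\<psi> (1\<^sub>m N)) (\<psi> K) (cadj (\<psi> K)) (\<psi> (cadj K * K))))"

end

theory Submission imports Defs begin

lemma sum_reindex_mult:
  fixes f :: "nat \<Rightarrow> 'a::comm_monoid_add"
  shows "(\<Sum>p<k*m. f p) = (\<Sum>a<k. \<Sum>s<m. f (a*m+s))"
proof -
  have "(\<Sum>p<k*m. f p) = (\<Sum>a<k. sum f {a*m..<a*m+m})"
    using sum.nat_group[of f m k] by simp
  also have "\<dots> = (\<Sum>a<k. \<Sum>s<m. f (a*m+s))"
  proof (rule sum.cong[OF refl])
    fix a
    show "sum f {a*m..<a*m+m} = (\<Sum>s<m. f (a*m+s))"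
      using sum.shift_bounds_nat_ivl[of f 0 "a*m" m] by (simp add: atLeast0LessThan add.commute)
  qed
  finally show ?thesis .
qed

lemma sum_split_add:
  fixes f :: "nat \<Rightarrow> 'a::comm_monoid_add"
  shows "(\<Sum>p<M+M. f p) = (\<Sum>p<M. f p) + (\<Sum>p<M. f (M+p))"
proof -
  have "{..<M+M} = {..<M} \<union> {M..<M+M}" by auto
  then have "(\<Sum>p<M+M. f p) = (\<Sum>p<M. f p) + sum f {M..<M+M}"
    by (simp add: sum.union_disjoint[symmetric] ivl_disj_int)
  moreover have "sum f {M..<M+M} = (\<Sum>p<M. f (M+p))"
    using sum.shift_bounds_nat_ivl[of f 0 M M] by (simp add: atLeast0LessThan add.commute)
  ultimately show ?thesis by simp
qed

definition Cc :: "(complex mat \<Rightarrow> complex mat) \<Rightarrow> nat \<Rightarrow> nat \<Rightarrow> nat \<Rightarrow> nat \<Rightarrow> nat \<Rightarrow> complex" where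
  "Cc \<phi> n i j s t = \<phi> (mat n n (\<lambda>(a,b). if a = i \<and> b = j then 1 else 0)) $$ (s,t)"

lemma choi:
  assumes lin: "lin_map n m \<phi>" and A: "A \<in> carrier_mat n n" and s: "s < m" and t: "t < m"
  shows "\<phi> A $$ (s,t) = (\<Sum>i<n. \<Sum>j<n. A $$ (i,j) * Cc \<phi> n i j s t)"
proof -
  define Ar where "Ar r = mat n n (\<lambda>(a,b). if a*n+b < r then A $$ (a,b) else 0)" for r
  have car: "\<phi> X \<in> carrier_mat m m" if "X \<in> carrier_mat n n" for X
    using lin that unfolding lin_map_def by blast
  have add: "\<phi> (X + Y) = \<phi> X + \<phi> Y" if "X \<in> carrier_mat n n" "Y \<in> carrier_mat n n" for X Y
    using lin that unfolding lin_map_def by blast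
  have sm: "\<phi> (c \<cdot>\<^sub>m X) = c \<cdot>\<^sub>m \<phi> X" if "X \<in> carrier_mat n n" for X c
    using lin that unfolding lin_map_def by blast
  have IH: "\<phi> (Ar r) $$ (s,t) = (\<Sum>p<r. A $$ (p div n, p mod n) * Cc \<phi> n (p div n) (p mod n) s t)"
    if "r \<le> n*n" for r
    using that
  proof (induction r)
    case 0
    have "Ar 0 = 0 \<cdot>\<^sub>m Ar 0" unfolding Ar_def by (rule eq_matI) auto
    then have "\<phi> (Ar 0) = 0 \<cdot>\<^sub>m \<phi> (Ar 0)" using sm[of "Ar 0" 0] unfolding Ar_def by simp
    moreover have "\<phi> (Ar 0) \<in> carrier_mat m m" using car unfolding Ar_def by simp
    ultimately have "\<phi> (Ar 0) $$ (s,t) = (0 \<cdot>\<^sub>m \<phi> (Ar 0)) $$ (s,t)" by simp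
    also have "\<dots> = 0" using s t \<open>\<phi> (Ar 0) \<in> carrier_mat m m\<close> by simp
    finally show ?case by simp
  next
    case (Suc r)
    define i where "i = r div n"
    define j where "j = r mod n"
    have n0: "n > 0" using Suc.prems by (cases n) auto
    have ij: "i < n" "j < n" using Suc.prems n0 unfolding i_def j_def
      by (auto simp: less_mult_imp_div_less)
    have rr: "r = i*n+j" unfolding i_def j_def by simp
    define E where "E = mat n n (\<lambda>(a,b). if a = i \<and> b = j then (1::complex) else 0)"
    have key: "a*n+b = r \<longleftrightarrow> a = i \<and> b = j" if "b < n" for a b
    proof
      assume h: "a*n+b = r"
      have "i = a" unfolding i_def h[symmetric] using that by simp
      moreover have "j = b" unfolding j_def h[symmetric] using that by simp
      ultimately show "a = i \<and> b = j" by simp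
    qed (simp add: rr)
    have eq: "Ar (Suc r) = Ar r + A $$ (i,j) \<cdot>\<^sub>m E"
      unfolding Ar_def E_def
      by (rule eq_matI) (auto simp: key less_Suc_eq rr[symmetric])
    have "\<phi> (Ar (Suc r)) = \<phi> (Ar r) + A $$ (i,j) \<cdot>\<^sub>m \<phi> E"
      unfolding eq by (subst add) (auto simp: Ar_def E_def sm)
    moreover have "\<phi> E \<in> carrier_mat m m" "\<phi> (Ar r) \<in> carrier_mat m m"
      using car unfolding Ar_def E_def by auto
    ultimately have "\<phi> (Ar (Suc r)) $$ (s,t) = \<phi> (Ar r) $$ (s,t) + A $$ (i,j) * \<phi> E $$ (s,t)"
      using s t by simp
    also have "\<dots> = (\<Sum>p<Suc r. A $$ (p div n, p mod n) * Cc \<phi> n (p div n) (p mod n) s t)"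
      using Suc by (simp add: Cc_def E_def i_def j_def)
    finally show ?case .
  qed
  have "Ar (n*n) = A"
  proof (rule eq_matI)
    fix a b assume "a < dim_row A" "b < dim_col A"
    then have "a < n" "b < n" using A by auto
    then have "a*n+b < (a+1)*n" by simp
    also have "(a+1)*n \<le> n*n" using \<open>a<n\<close> by (intro mult_le_mono1) simp
    finally have "a*n+b < n*n" .
    then show "Ar (n*n) $$ (a,b) = A $$ (a,b)" using \<open>a<n\<close> \<open>b<n\<close> unfolding Ar_def by simp
  qed (use A in \<open>auto simp: Ar_def\<close>)
  then have "\<phi> A $$ (s,t) = (\<Sum>p<n*n. A $$ (p div n, p mod n) * Cc \<phi> n (p div n) (p mod n) s t)"
    using IH[of "n*n"] by simp
  also have "\<dots> = (\<Sum>i<n. \<Sum>j<n. A $$ (i,j) * Cc \<phi> n i j s t)"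
    by (subst sum_reindex_mult) simp
  finally show ?thesis .
qed


definition Bf :: "nat \<Rightarrow> nat \<Rightarrow> (nat\<Rightarrow>nat\<Rightarrow>nat\<Rightarrow>nat\<Rightarrow>complex) \<Rightarrow> (nat\<Rightarrow>complex) \<Rightarrow> (nat\<Rightarrow>nat\<Rightarrow>complex) \<Rightarrow> (nat\<Rightarrow>complex) \<Rightarrow> complex" where
  "Bf n m C y X w = (\<Sum>s<m. \<Sum>t<m. cnj (y s) * (\<Sum>i<n. \<Sum>j<n. X i j * C i j s t) * w t)"

lemma ampl_entry:
  assumes lin: "lin_map n m \<phi>" and p: "p < k*m" and q: "q < k*m"
  shows "ampl k n m \<phi> X $$ (p,q) = (\<Sum>i<n. \<Sum>j<n. X $$ ((p div m)*n+i, (q div m)*n+j) * Cc \<phi> n i j (p mod m) (q mod m))"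
proof -
  have m0: "m > 0" using p by (cases m) auto
  have "ampl k n m \<phi> X $$ (p,q) = \<phi> (blk n X (p div m) (q div m)) $$ (p mod m, q mod m)"
    unfolding ampl_def using p q by simp
  also have "\<dots> = (\<Sum>i<n. \<Sum>j<n. blk n X (p div m) (q div m) $$ (i,j) * Cc \<phi> n i j (p mod m) (q mod m))"
    by (rule choi[OF lin]) (auto simp: blk_def m0)
  also have "\<dots> = (\<Sum>i<n. \<Sum>j<n. X $$ ((p div m)*n+i, (q div m)*n+j) * Cc \<phi> n i j (p mod m) (q mod m))"
    by (intro sum.cong refl) (simp add: blk_def)
  finally show ?thesis .
qed

lemma quad_reindex:
  fixes G :: "nat \<Rightarrow> nat \<Rightarrow> nat \<Rightarrow> nat \<Rightarrow> complex"
  shows "(\<Sum>p<k*m. \<Sum>q<k*m. cnj (v p) * G (p div m) (q div m) (p mod m) (q mod m) * w q)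
     = (\<Sum>a<k. \<Sum>b<k. \<Sum>s<m. \<Sum>t<m. cnj (v (a*m+s)) * G a b s t * w (b*m+t))"
proof -
  have "(\<Sum>p<k*m. \<Sum>q<k*m. cnj (v p) * G (p div m) (q div m) (p mod m) (q mod m) * w q)
     = (\<Sum>a<k. \<Sum>s<m. \<Sum>b<k. \<Sum>t<m. cnj (v (a*m+s)) * G a b s t * w (b*m+t))"
    by (simp only: sum_reindex_mult) (intro sum.cong refl, simp)
  also have "\<dots> = (\<Sum>a<k. \<Sum>b<k. \<Sum>s<m. \<Sum>t<m. cnj (v (a*m+s)) * G a b s t * w (b*m+t))"
    by (rule sum.cong[OF refl], rule sum.swap)
  finally show ?thesis .
qed

lemma rank_one_psd:
  fixes U :: "nat \<Rightarrow> complex"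
  shows "psd N (mat N N (\<lambda>(p,q). U p * cnj (U q)))"
  unfolding psd_def
proof (intro conjI allI)
  fix v :: "nat \<Rightarrow> complex"
  define S where "S = (\<Sum>p<N. cnj (v p) * U p)"
  have "(\<Sum>i<N. \<Sum>j<N. cnj (v i) * mat N N (\<lambda>(p,q). U p * cnj (U q)) $$ (i,j) * v j)
      = (\<Sum>i<N. \<Sum>j<N. (cnj (v i) * U i) * cnj (cnj (v j) * U j))"
    by (intro sum.cong refl) (simp add: mult_ac)
  also have "\<dots> = S * cnj S" unfolding S_def by (simp add: sum_product cnj_sum)
  also have "\<dots> = complex_of_real ((Re S)^2 + (Im S)^2)" by (rule complex_mult_cnj)
  finally have eq: "(\<Sum>i<N. \<Sum>j<N. cnj (v i) * mat N N (\<lambda>(p,q). U p * cnj (U q)) $$ (i,j) * v j) = complex_of_real ((Re S)^2 + (Im S)^2)" .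
  show "(\<Sum>i<N. \<Sum>j<N. cnj (v i) * mat N N (\<lambda>(p,q). U p * cnj (U q)) $$ (i,j) * v j) \<in> \<real>"
    unfolding eq by simp
  show "0 \<le> Re (\<Sum>i<N. \<Sum>j<N. cnj (v i) * mat N N (\<lambda>(p,q). U p * cnj (U q)) $$ (i,j) * v j)"
    unfolding eq by simp
qed simp

lemma lemmaA:
  assumes lin: "lin_map n m \<phi>" and pos: "j_positive K n m \<phi>"
  shows "(\<Sum>a<K. \<Sum>b<K. Bf n m (Cc \<phi> n) (y a) (\<lambda>i j. u a i * cnj (u b j)) (y b)) \<in> \<real> \<and>
         0 \<le> Re (\<Sum>a<K. \<Sum>b<K. Bf n m (Cc \<phi> n) (y a) (\<lambda>i j. u a i * cnj (u b j)) (y b))"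
proof -
  define X where "X = mat (K*n) (K*n) (\<lambda>(p,q). u (p div n) (p mod n) * cnj (u (q div n) (q mod n)))"
  have "psd (K*n) X" unfolding X_def by (rule rank_one_psd)
  moreover have "X \<in> carrier_mat (K*n) (K*n)" unfolding X_def by simp
  ultimately have P: "psd (K*m) (ampl K n m \<phi> X)" using pos unfolding j_positive_def by blast
  define v where "v p = y (p div m) (p mod m)" for p
  define G where "G a b s t = (\<Sum>i<n. \<Sum>j<n. X $$ (a*n+i, b*n+j) * Cc \<phi> n i j s t)" for a b s t
  have "(\<Sum>p<K*m. \<Sum>q<K*m. cnj (v p) * ampl K n m \<phi> X $$ (p,q) * v q)
      = (\<Sum>p<K*m. \<Sum>q<K*m. cnj (v p) * G (p div m) (q div m) (p mod m) (q mod m) * v q)"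
    by (intro sum.cong refl) (simp add: ampl_entry[OF lin] G_def)
  also have "\<dots> = (\<Sum>a<K. \<Sum>b<K. \<Sum>s<m. \<Sum>t<m. cnj (v (a*m+s)) * G a b s t * v (b*m+t))"
    by (rule quad_reindex)
  also have "\<dots> = (\<Sum>a<K. \<Sum>b<K. Bf n m (Cc \<phi> n) (y a) (\<lambda>i j. u a i * cnj (u b j)) (y b))"
    unfolding Bf_def
  proof (intro sum.cong refl)
    fix a b s t assume ab: "a \<in> {..<K}" "b \<in> {..<K}" and st: "s \<in> {..<m}" "t \<in> {..<m}"
    have "G a b s t = (\<Sum>i<n. \<Sum>j<n. u a i * cnj (u b j) * Cc \<phi> n i j s t)"
      unfolding G_def
    proof (intro sum.cong refl)
      fix i j assume "i \<in> {..<n}" "j \<in> {..<n}"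
      then have i: "i < n" and j: "j < n" by auto
      have "a*n+i < K*n"
      proof -
        have "a*n+i < (a+1)*n" using i by simp
        also have "(a+1)*n \<le> K*n" using ab by (intro mult_le_mono1) simp
        finally show ?thesis .
      qed
      moreover have "b*n+j < K*n"
      proof -
        have "b*n+j < (b+1)*n" using j by simp
        also have "(b+1)*n \<le> K*n" using ab by (intro mult_le_mono1) simp
        finally show ?thesis .
      qed
      ultimately show "X $$ (a*n+i, b*n+j) * Cc \<phi> n i j s t = u a i * cnj (u b j) * Cc \<phi> n i j s t"
        unfolding X_def using i j by simp
    qed
    then show "cnj (v (a*m+s)) * G a b s t * v (b*m+t) = cnj (y a s) * (\<Sum>i<n. \<Sum>j<n. u a i * cnj (u b j) * Cc \<phi> n i j s t) * y b t"
      using st unfolding v_def by simp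
  qed
  finally show ?thesis using P unfolding psd_def by metis
qed


lemma sum_two:
  fixes f :: "nat \<Rightarrow> 'a::comm_monoid_add"
  assumes "2 \<le> K" "\<And>a. 2 \<le> a \<Longrightarrow> f a = 0"
  shows "(\<Sum>a<K. f a) = f 0 + f 1"
proof -
  have "(\<Sum>a<K. f a) = (\<Sum>a\<in>{0,1}. f a)"
    by (rule sum.mono_neutral_right) (use assms in auto)
  then show ?thesis by simp
qed

lemma two_blocks:
  assumes lin: "lin_map n m \<phi>" and pos: "j_positive K n m \<phi>" and K: "2 \<le> K"
  shows "Bf n m (Cc \<phi> n) y0 (\<lambda>i j. u0 i * cnj (u0 j)) y0 + Bf n m (Cc \<phi> n) y0 (\<lambda>i j. u0 i * cnj (u1 j)) y1
       + Bf n m (Cc \<phi> n) y1 (\<lambda>i j. u1 i * cnj (u0 j)) y0 + Bf n m (Cc \<phi> n) y1 (\<lambda>i j. u1 i * cnj (u1 j)) y1 \<in> \<real>"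
proof -
  define u where "u (a::nat) = (if a = 0 then u0 else if a = 1 then u1 else (\<lambda>_. 0))" for a
  define y where "y (a::nat) = (if a = 0 then y0 else if a = 1 then y1 else (\<lambda>_. 0))" for a
  have "(\<Sum>a<K. \<Sum>b<K. Bf n m (Cc \<phi> n) (y a) (\<lambda>i j. u a i * cnj (u b j)) (y b)) \<in> \<real>"
    using lemmaA[OF lin pos] by blast
  moreover have "(\<Sum>a<K. \<Sum>b<K. Bf n m (Cc \<phi> n) (y a) (\<lambda>i j. u a i * cnj (u b j)) (y b))
    = (\<Sum>b<K. Bf n m (Cc \<phi> n) (y 0) (\<lambda>i j. u 0 i * cnj (u b j)) (y b)) + (\<Sum>b<K. Bf n m (Cc \<phi> n) (y 1) (\<lambda>i j. u 1 i * cnj (u b j)) (y b))"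
    by (rule sum_two[OF K]) (simp add: y_def Bf_def)
  moreover have "(\<Sum>b<K. Bf n m (Cc \<phi> n) (y 0) (\<lambda>i j. u 0 i * cnj (u b j)) (y b)) =
       Bf n m (Cc \<phi> n) y0 (\<lambda>i j. u0 i * cnj (u0 j)) y0 + Bf n m (Cc \<phi> n) y0 (\<lambda>i j. u0 i * cnj (u1 j)) y1"
    by (subst sum_two[OF K]) (simp_all add: y_def u_def Bf_def)
  moreover have "(\<Sum>b<K. Bf n m (Cc \<phi> n) (y 1) (\<lambda>i j. u 1 i * cnj (u b j)) (y b)) =
       Bf n m (Cc \<phi> n) y1 (\<lambda>i j. u1 i * cnj (u0 j)) y0 + Bf n m (Cc \<phi> n) y1 (\<lambda>i j. u1 i * cnj (u1 j)) y1"
    by (subst sum_two[OF K]) (simp_all add: y_def u_def Bf_def)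
  ultimately show ?thesis by (simp add: add.assoc)
qed

lemma cross_real:
  assumes lin: "lin_map n m \<phi>" and pos: "j_positive K n m \<phi>" and K: "2 \<le> K"
  shows "Bf n m (Cc \<phi> n) y0 (\<lambda>i j. u0 i * cnj (u1 j)) y1 + Bf n m (Cc \<phi> n) y1 (\<lambda>i j. u1 i * cnj (u0 j)) y0 \<in> \<real>"
proof -
  note T = two_blocks[OF lin pos K]
  have z: "Bf n m C (\<lambda>_. 0) X w = 0" "Bf n m C w X (\<lambda>_. 0) = 0" "Bf n m C w (\<lambda>i j. 0) w' = 0" for C X w w'
    by (simp_all add: Bf_def)
  have A: "Bf n m (Cc \<phi> n) y0 (\<lambda>i j. u0 i * cnj (u0 j)) y0 \<in> \<real>"
    using T[of y0 u0 "\<lambda>_. 0" "\<lambda>_. 0"] by (simp add: z)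
  have B: "Bf n m (Cc \<phi> n) y1 (\<lambda>i j. u1 i * cnj (u1 j)) y1 \<in> \<real>"
    using T[of "\<lambda>_. 0" "\<lambda>_. 0" u1 y1] by (simp add: z)
  have "(Bf n m (Cc \<phi> n) y0 (\<lambda>i j. u0 i * cnj (u0 j)) y0 + Bf n m (Cc \<phi> n) y0 (\<lambda>i j. u0 i * cnj (u1 j)) y1
       + Bf n m (Cc \<phi> n) y1 (\<lambda>i j. u1 i * cnj (u0 j)) y0 + Bf n m (Cc \<phi> n) y1 (\<lambda>i j. u1 i * cnj (u1 j)) y1)
       - Bf n m (Cc \<phi> n) y0 (\<lambda>i j. u0 i * cnj (u0 j)) y0 - Bf n m (Cc \<phi> n) y1 (\<lambda>i j. u1 i * cnj (u1 j)) y1 \<in> \<real>"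
    using T A B by (intro Reals_diff) auto
  then show ?thesis by (simp add: algebra_simps)
qed

definition ev :: "nat \<Rightarrow> nat \<Rightarrow> complex" where "ev l x = (if x = l then 1 else 0)"

lemma ev_sum: "l < N \<Longrightarrow> (\<Sum>x<N. ev l x * f x) = f l"
  by (simp add: ev_def if_distrib[of "\<lambda>z. z * _"] cong: if_cong)

lemma Bf_ev:
  assumes "i < n" "j < n" "s < m" "t < m"
  shows "Bf n m C (\<lambda>x. a * ev s x) (\<lambda>p q. ev i p * cnj (ev j q)) (\<lambda>x. c * ev t x) = cnj a * c * C i j s t"
proof -
  have "Bf n m C (\<lambda>x. a * ev s x) (\<lambda>p q. ev i p * cnj (ev j q)) (\<lambda>x. c * ev t x)
     = (\<Sum>s'<m. ev s s' * (\<Sum>t'<m. ev t t' * (cnj a * c * (\<Sum>i'<n. ev i i' * (\<Sum>j'<n. ev j j' * C i' j' s' t')))))"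
    unfolding Bf_def
    by (simp only: sum_distrib_left sum_distrib_right) (intro sum.cong refl; simp add: ev_def)
  also have "\<dots> = cnj a * c * C i j s t" using assms by (simp add: ev_sum)
  finally show ?thesis .
qed

lemma herm:
  assumes lin: "lin_map n m \<phi>" and pos: "j_positive K n m \<phi>" and K: "2 \<le> K"
    and ij: "i < n" "j < n" and st: "s < m" "t < m"
  shows "Cc \<phi> n j i t s = cnj (Cc \<phi> n i j s t)"
proof -
  have R: "c * Cc \<phi> n i j s t + cnj c * Cc \<phi> n j i t s \<in> \<real>" for c
  proof -
    have e1: "Bf n m (Cc \<phi> n) (\<lambda>x. 1 * ev s x) (\<lambda>p q. ev i p * cnj (ev j q)) (\<lambda>x. c * ev t x) = cnj 1 * c * Cc \<phi> n i j s t"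
      by (rule Bf_ev) (use ij st in auto)
    have e2: "Bf n m (Cc \<phi> n) (\<lambda>x. c * ev t x) (\<lambda>p q. ev j p * cnj (ev i q)) (\<lambda>x. 1 * ev s x) = cnj c * 1 * Cc \<phi> n j i t s"
      by (rule Bf_ev) (use ij st in auto)
    show ?thesis
      using cross_real[OF lin pos K, of "\<lambda>x. 1 * ev s x" "ev i" "ev j" "\<lambda>x. c * ev t x"]
      unfolding e1 e2 by simp
  qed
  have 1: "Im (Cc \<phi> n i j s t + Cc \<phi> n j i t s) = 0" using R[of 1] by (simp add: complex_is_Real_iff)
  have 2: "Im (\<i> * Cc \<phi> n i j s t - \<i> * Cc \<phi> n j i t s) = 0" using R[of "\<i>"] by (simp add: complex_is_Real_iff)
  show ?thesis using 1 2 by (intro complex_eqI) auto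
qed


lemma sum_shift0:
  fixes f :: "nat \<Rightarrow> 'a::comm_monoid_add"
  shows "(\<Sum>a<Suc k. f a) = f 0 + (\<Sum>a<k. f (Suc a))"
  by (induction k) (simp_all add: add.assoc)

lemma ev_sym: "ev a b = ev b a" by (simp add: ev_def)
lemma cnj_ev[simp]: "cnj (ev a b) = ev a b" by (simp add: ev_def)
lemma ev_sum': "l < N \<Longrightarrow> (\<Sum>x<N. f x * ev l x) = f l"
  using ev_sum[of l N f] by (simp add: mult.commute)

lemma Bf_add: "Bf n m C y X w + Bf n m C y Y w = Bf n m C y (\<lambda>i j. X i j + Y i j) w"
  by (simp add: Bf_def ring_distribs sum.distrib)

lemma Bf_sum: "finite L \<Longrightarrow> (\<Sum>l\<in>L. Bf n m C y (X l) w) = Bf n m C y (\<lambda>i j. \<Sum>l\<in>L. X l i j) w"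
proof (induction L rule: finite_induct)
  case empty then show ?case by (simp add: Bf_def)
next
  case (insert x F) then show ?case by (simp add: Bf_add)
qed

lemma Bf_cong: "(\<And>i j. i < n \<Longrightarrow> j < n \<Longrightarrow> X i j = Y i j) \<Longrightarrow> Bf n m C y X w = Bf n m C y Y w"
  unfolding Bf_def by (intro sum.cong refl) auto

lemma idx_lt: "a < k \<Longrightarrow> i < n \<Longrightarrow> a*n+i < k*(n::nat)"
proof -
  assume "a < k" "i < n"
  then have "a*n+i < (a+1)*n" by simp
  also have "(a+1)*n \<le> k*n" using \<open>a < k\<close> by (intro mult_le_mono1) simp
  finally show ?thesis .
qed

lemma idx_eq: "i < n \<Longrightarrow> j < n \<Longrightarrow> (a*n+i = b*n+(j::nat)) \<longleftrightarrow> a = b \<and> i = j"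
proof
  assume ij: "i < n" "j < n" and h: "a*n+i = b*n+j"
  have "a = (a*n+i) div n" using ij by simp
  also have "\<dots> = b" unfolding h using ij by simp
  finally have "a = b" .
  then show "a = b \<and> i = j" using h by simp
qed simp

lemma dim_ampl[simp]: "dim_row (ampl k n m \<phi> X) = k*m" "dim_col (ampl k n m \<phi> X) = k*m"
  by (simp_all add: ampl_def)

lemma dim_cadj[simp]: "dim_row (cadj A) = dim_col A" "dim_col (cadj A) = dim_row A"
  by (simp_all add: cadj_def)

lemma index_cadj: "i < dim_col A \<Longrightarrow> j < dim_row A \<Longrightarrow> cadj A $$ (i,j) = cnj (A $$ (j,i))"
  by (simp add: cadj_def)

lemma Q_to_Bf:
  assumes "\<And>p q. p < k*m \<Longrightarrow> q < k*m \<Longrightarrow> A $$ (p,q) = (\<Sum>i<n. \<Sum>j<n. X (p div m) (q div m) i j * C i j (p mod m) (q mod m))"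
  shows "(\<Sum>p<k*m. \<Sum>q<k*m. cnj (v p) * A $$ (p,q) * w q) = (\<Sum>a<k. \<Sum>b<k. Bf n m C (\<lambda>s. v (a*m+s)) (X a b) (\<lambda>t. w (b*m+t)))"
proof -
  define G where "G a b s t = (\<Sum>i<n. \<Sum>j<n. X a b i j * C i j s t)" for a b s t
  have "(\<Sum>p<k*m. \<Sum>q<k*m. cnj (v p) * A $$ (p,q) * w q) = (\<Sum>p<k*m. \<Sum>q<k*m. cnj (v p) * G (p div m) (q div m) (p mod m) (q mod m) * w q)"
    by (intro sum.cong refl) (simp add: assms G_def)
  also have "\<dots> = (\<Sum>a<k. \<Sum>b<k. \<Sum>s<m. \<Sum>t<m. cnj (v (a*m+s)) * G a b s t * w (b*m+t))"
    by (rule quad_reindex)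
  also have "\<dots> = (\<Sum>a<k. \<Sum>b<k. Bf n m C (\<lambda>s. v (a*m+s)) (X a b) (\<lambda>t. w (b*m+t)))"
    unfolding Bf_def G_def by simp
  finally show ?thesis .
qed


lemma ev_sum2: "l < N \<Longrightarrow> (\<Sum>x<N. ev x l * f x) = f l"
  by (simp add: ev_def if_distrib[of "\<lambda>z. z * _"] cong: if_cong)

lemma ev_sum2': "l < N \<Longrightarrow> (\<Sum>x<N. f x * ev x l) = f l"
  using ev_sum2[of l N f] by (simp add: mult.commute)

lemma Bf_zero: "Bf n m C y (\<lambda>i j. 0) w = 0" by (simp add: Bf_def)

lemma cadj_mult_entry:
  assumes Km: "Km \<in> carrier_mat (k*n) (k*n)" and "a < k" "b < k" "i < n" "j < n"
  shows "(cadj Km * Km) $$ (a*n+i, b*n+j) = (\<Sum>c<k. \<Sum>i0<n. cnj (Km $$ (c*n+i0, a*n+i)) * Km $$ (c*n+i0, b*n+j))"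
proof -
  have lt: "a*n+i < k*n" "b*n+j < k*n" using assms idx_lt by auto
  have "(cadj Km * Km) $$ (a*n+i, b*n+j) = (\<Sum>r<k*n. cnj (Km $$ (r, a*n+i)) * Km $$ (r, b*n+j))"
  proof -
    have d: "dim_row Km = k*n" "dim_col Km = k*n" using Km by auto
    have "(cadj Km * Km) $$ (a*n+i, b*n+j) = row (cadj Km) (a*n+i) \<bullet> col Km (b*n+j)"
      using lt d by (subst index_mult_mat) auto
    also have "\<dots> = (\<Sum>r\<in>{0..<k*n}. row (cadj Km) (a*n+i) $ r * col Km (b*n+j) $ r)"
      unfolding scalar_prod_def using d by simp
    also have "\<dots> = (\<Sum>r<k*n. cnj (Km $$ (r, a*n+i)) * Km $$ (r, b*n+j))"
      unfolding atLeast0LessThan using lt d by (intro sum.cong refl) (simp add: index_cadj)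
    finally show ?thesis .
  qed
  also have "\<dots> = (\<Sum>c<k. \<Sum>i0<n. cnj (Km $$ (c*n+i0, a*n+i)) * Km $$ (c*n+i0, b*n+j))"
    by (rule sum_reindex_mult)
  finally show ?thesis .
qed

lemma ampl_carrier: "ampl k n m \<phi> X \<in> carrier_mat (k*m) (k*m)" unfolding ampl_def by (rule mat_carrier)

lemma cadj_entry:
  assumes lin: "lin_map n m \<phi>" and pos: "j_positive K n m \<phi>" and K: "2 \<le> K"
    and p: "p < k*m" and q: "q < k*m"
  shows "cadj (ampl k n m \<phi> Km) $$ (p,q) = (\<Sum>i<n. \<Sum>j<n. cnj (Km $$ ((q div m)*n+j, (p div m)*n+i)) * Cc \<phi> n i j (p mod m) (q mod m))"
proof -
  have m0: "m > 0" using p by (cases m) auto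
  have "cadj (ampl k n m \<phi> Km) $$ (p,q) = cnj (ampl k n m \<phi> Km $$ (q,p))"
    using p q by (subst index_cadj) simp_all
  also have "\<dots> = (\<Sum>i<n. \<Sum>j<n. cnj (Km $$ ((q div m)*n+i, (p div m)*n+j)) * cnj (Cc \<phi> n i j (q mod m) (p mod m)))"
    using p q by (simp only: ampl_entry[OF lin] cnj_sum complex_cnj_mult)
  also have "\<dots> = (\<Sum>i<n. \<Sum>j<n. cnj (Km $$ ((q div m)*n+i, (p div m)*n+j)) * Cc \<phi> n j i (p mod m) (q mod m))"
  proof (intro sum.cong refl)
    fix i j assume "i \<in> {..<n}" "j \<in> {..<n}"
    then have ij: "i < n" "j < n" by auto
    have st: "q mod m < m" "p mod m < m" using m0 by auto
    show "cnj (Km $$ ((q div m)*n+i, (p div m)*n+j)) * cnj (Cc \<phi> n i j (q mod m) (p mod m)) =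
          cnj (Km $$ ((q div m)*n+i, (p div m)*n+j)) * Cc \<phi> n j i (p mod m) (q mod m)"
      using herm[OF lin pos K ij st] by simp
  qed
  also have "\<dots> = (\<Sum>j<n. \<Sum>i<n. cnj (Km $$ ((q div m)*n+i, (p div m)*n+j)) * Cc \<phi> n j i (p mod m) (q mod m))"
    by (rule sum.swap)
  finally show ?thesis .
qed

theorem theoremA1:
  fixes k n m :: nat and \<phi> :: "complex mat \<Rightarrow> complex mat"
  assumes "lin_map n m \<phi>"
    and "j_positive (k+1) n m \<phi>"
  shows "gen_schwarz (k*n) (k*m) (ampl k n m \<phi>)"
  unfolding gen_schwarz_def
proof (intro ballI)
  note lin = assms(1) and pos = assms(2)
  fix Km :: "complex mat" assume Km: "Km \<in> carrier_mat (k*n) (k*n)"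
  define F where "F = four_block_mat (ampl k n m \<phi> (1\<^sub>m (k*n))) (ampl k n m \<phi> Km) (cadj (ampl k n m \<phi> Km)) (ampl k n m \<phi> (cadj Km * Km))"
  have Fc: "F \<in> carrier_mat (2*(k*m)) (2*(k*m))"
    unfolding F_def mult_2 using ampl_carrier[of k n m \<phi> "1\<^sub>m (k*n)"] ampl_carrier[of k n m \<phi> "cadj Km * Km"]
    by (simp only: four_block_carrier_mat)
  have Fe: "F $$ (p,q) = ampl k n m \<phi> (1\<^sub>m (k*n)) $$ (p,q)"
    "F $$ (p,k*m+q) = ampl k n m \<phi> Km $$ (p,q)"
    "F $$ (k*m+p,q) = cadj (ampl k n m \<phi> Km) $$ (p,q)"
    "F $$ (k*m+p,k*m+q) = ampl k n m \<phi> (cadj Km * Km) $$ (p,q)"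
    if "p < k*m" "q < k*m" for p q
    using that unfolding F_def by (subst index_mat_four_block; simp)+
  have "psd (2*(k*m)) F"
  proof (cases "k = 0")
    case True
    then show ?thesis using Fc unfolding psd_def by simp
  next
    case False
    then have K: "2 \<le> k+1" by simp
    show ?thesis unfolding psd_def
    proof (intro conjI allI Fc)
      fix v :: "nat \<Rightarrow> complex"
      define xs where "xs a = (\<lambda>s. v (a*m+s))" for a
      define zs where "zs a = (\<lambda>t. v (k*m + (a*m+t)))" for a
      define Q where "Q = (\<Sum>i<2*(k*m). \<Sum>j<2*(k*m). cnj (v i) * F $$ (i,j) * v j)"
      define Q11 where "Q11 = (\<Sum>p<k*m. \<Sum>q<k*m. cnj (v p) * ampl k n m \<phi> (1\<^sub>m (k*n)) $$ (p,q) * v q)"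
      define Q12 where "Q12 = (\<Sum>p<k*m. \<Sum>q<k*m. cnj (v p) * ampl k n m \<phi> Km $$ (p,q) * (\<lambda>q. v (k*m+q)) q)"
      define Q21 where "Q21 = (\<Sum>p<k*m. \<Sum>q<k*m. cnj ((\<lambda>p. v (k*m+p)) p) * cadj (ampl k n m \<phi> Km) $$ (p,q) * v q)"
      define Q22 where "Q22 = (\<Sum>p<k*m. \<Sum>q<k*m. cnj ((\<lambda>p. v (k*m+p)) p) * ampl k n m \<phi> (cadj Km * Km) $$ (p,q) * (\<lambda>q. v (k*m+q)) q)"
      have Qsplit: "Q = Q11 + Q12 + Q21 + Q22"
      proof -
        have "Q = (\<Sum>i<k*m+k*m. \<Sum>j<k*m+k*m. cnj (v i) * F $$ (i,j) * v j)"
          unfolding Q_def mult_2 ..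
        also have "\<dots> = (\<Sum>p<k*m. \<Sum>q<k*m. cnj (v p) * F $$ (p,q) * v q) + (\<Sum>p<k*m. \<Sum>q<k*m. cnj (v p) * F $$ (p,k*m+q) * v (k*m+q))
           + ((\<Sum>p<k*m. \<Sum>q<k*m. cnj (v (k*m+p)) * F $$ (k*m+p,q) * v q) + (\<Sum>p<k*m. \<Sum>q<k*m. cnj (v (k*m+p)) * F $$ (k*m+p,k*m+q) * v (k*m+q)))"
          by (simp only: sum_split_add sum.distrib) (simp only: ac_simps)
        also have "\<dots> = Q11 + Q12 + (Q21 + Q22)"
          unfolding Q11_def Q12_def Q21_def Q22_def
          by (simp add: Fe)
        finally show ?thesis by (simp add: add.assoc)
      qed
      have B11: "Q11 = (\<Sum>a<k. \<Sum>b<k. Bf n m (Cc \<phi> n) (xs a) (\<lambda>i j. 1\<^sub>m (k*n) $$ (a*n+i, b*n+j)) (xs b))"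
        unfolding Q11_def xs_def
        by (rule Q_to_Bf[where X="\<lambda>a b i j. 1\<^sub>m (k*n) $$ (a*n+i, b*n+j)"]) (simp add: ampl_entry[OF lin])
      have B12: "Q12 = (\<Sum>a<k. \<Sum>b<k. Bf n m (Cc \<phi> n) (xs a) (\<lambda>i j. Km $$ (a*n+i, b*n+j)) (zs b))"
        unfolding Q12_def xs_def zs_def
        by (rule Q_to_Bf[where X="\<lambda>a b i j. Km $$ (a*n+i, b*n+j)"]) (simp add: ampl_entry[OF lin])
      have B21: "Q21 = (\<Sum>a<k. \<Sum>b<k. Bf n m (Cc \<phi> n) (zs a) (\<lambda>i j. cnj (Km $$ (b*n+j, a*n+i))) (xs b))"
        unfolding Q21_def xs_def zs_def
        by (rule Q_to_Bf[where X="\<lambda>a b i j. cnj (Km $$ (b*n+j, a*n+i))"]) (simp add: cadj_entry[OF lin pos K])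
      have B22: "Q22 = (\<Sum>a<k. \<Sum>b<k. Bf n m (Cc \<phi> n) (zs a) (\<lambda>i j. (cadj Km * Km) $$ (a*n+i, b*n+j)) (zs b))"
        unfolding Q22_def zs_def
        by (rule Q_to_Bf[where X="\<lambda>a b i j. (cadj Km * Km) $$ (a*n+i, b*n+j)"]) (simp add: ampl_entry[OF lin])
      define u where "u c i0 a = (if a = 0 then ev i0 else (\<lambda>j. cnj (Km $$ (c*n+i0, (a-1)*n+j))))" for c i0 a :: nat
      define y where "y c a = (if a = 0 then xs c else zs (a-1))" for c a :: nat
      define T where "T c i0 = (\<Sum>a<k+1. \<Sum>b<k+1. Bf n m (Cc \<phi> n) (y c a) (\<lambda>i j. u c i0 a i * cnj (u c i0 b j)) (y c b))" for c i0
      have Tpos: "T c i0 \<in> \<real> \<and> 0 \<le> Re (T c i0)" for c i0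
        unfolding T_def by (rule lemmaA[OF lin pos])
      have Tsplit: "T c i0 = Bf n m (Cc \<phi> n) (xs c) (\<lambda>i j. ev i0 i * cnj (ev i0 j)) (xs c)
         + (\<Sum>b<k. Bf n m (Cc \<phi> n) (xs c) (\<lambda>i j. ev i0 i * Km $$ (c*n+i0, b*n+j)) (zs b))
         + (\<Sum>a<k. Bf n m (Cc \<phi> n) (zs a) (\<lambda>i j. cnj (Km $$ (c*n+i0, a*n+i)) * ev i0 j) (xs c))
         + (\<Sum>a<k. \<Sum>b<k. Bf n m (Cc \<phi> n) (zs a) (\<lambda>i j. cnj (Km $$ (c*n+i0, a*n+i)) * Km $$ (c*n+i0, b*n+j)) (zs b))" for c i0
        unfolding T_def Suc_eq_plus1[symmetric] sum_shift0 by (simp add: u_def y_def sum.distrib add_ac)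
      have P1: "(\<Sum>c<k. \<Sum>i0<n. Bf n m (Cc \<phi> n) (xs c) (\<lambda>i j. ev i0 i * cnj (ev i0 j)) (xs c)) = Q11"
      proof -
        have h1: "(\<Sum>i0<n. Bf n m (Cc \<phi> n) (xs c) (\<lambda>i j. ev i0 i * cnj (ev i0 j)) (xs c)) = Bf n m (Cc \<phi> n) (xs c) (\<lambda>i j. ev i j) (xs c)" for c
          unfolding Bf_sum[OF finite_lessThan] by (rule Bf_cong) (simp add: ev_sum2)
        have h2: "Bf n m (Cc \<phi> n) (xs a) (\<lambda>i j. 1\<^sub>m (k*n) $$ (a*n+i, b*n+j)) (xs b) = (if b = a then Bf n m (Cc \<phi> n) (xs a) (\<lambda>i j. ev i j) (xs a) else 0)"
          if "a < k" "b < k" for a b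
        proof (cases "b = a")
          case True
          then show ?thesis using that by (simp, intro Bf_cong) (simp add: idx_lt ev_def)
        next
          case False
          have "Bf n m (Cc \<phi> n) (xs a) (\<lambda>i j. 1\<^sub>m (k*n) $$ (a*n+i, b*n+j)) (xs b) = Bf n m (Cc \<phi> n) (xs a) (\<lambda>i j. 0) (xs b)"
            by (rule Bf_cong) (use that False in \<open>simp add: idx_lt idx_eq\<close>)
          then show ?thesis using False by (simp add: Bf_zero)
        qed
        have L: "(\<Sum>c<k. \<Sum>i0<n. Bf n m (Cc \<phi> n) (xs c) (\<lambda>i j. ev i0 i * cnj (ev i0 j)) (xs c)) = (\<Sum>c<k. Bf n m (Cc \<phi> n) (xs c) (\<lambda>i j. ev i j) (xs c))"
          by (rule sum.cong[OF refl]) (rule h1)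
        have "Q11 = (\<Sum>a<k. \<Sum>b<k. if b = a then Bf n m (Cc \<phi> n) (xs a) (\<lambda>i j. ev i j) (xs a) else 0)"
          unfolding B11 by (intro sum.cong refl) (simp add: h2)
        also have "\<dots> = (\<Sum>a<k. Bf n m (Cc \<phi> n) (xs a) (\<lambda>i j. ev i j) (xs a))"
          by (intro sum.cong refl) simp
        finally show ?thesis unfolding L by (rule sym)
      qed
      have P2: "(\<Sum>c<k. \<Sum>i0<n. \<Sum>b<k. Bf n m (Cc \<phi> n) (xs c) (\<lambda>i j. ev i0 i * Km $$ (c*n+i0, b*n+j)) (zs b)) = Q12"
      proof -
        have "(\<Sum>i0<n. \<Sum>b<k. Bf n m (Cc \<phi> n) (xs c) (\<lambda>i j. ev i0 i * Km $$ (c*n+i0, b*n+j)) (zs b))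
            = (\<Sum>b<k. \<Sum>i0<n. Bf n m (Cc \<phi> n) (xs c) (\<lambda>i j. ev i0 i * Km $$ (c*n+i0, b*n+j)) (zs b))" for c
          by (rule sum.swap)
        also have "\<dots> c = (\<Sum>b<k. Bf n m (Cc \<phi> n) (xs c) (\<lambda>i j. Km $$ (c*n+i, b*n+j)) (zs b))" for c
          unfolding Bf_sum[OF finite_lessThan] by (intro sum.cong refl Bf_cong) (simp add: ev_sum2)
        finally show ?thesis unfolding B12 by simp
      qed
      have P3: "(\<Sum>c<k. \<Sum>i0<n. \<Sum>a<k. Bf n m (Cc \<phi> n) (zs a) (\<lambda>i j. cnj (Km $$ (c*n+i0, a*n+i)) * ev i0 j) (xs c)) = Q21"
      proof -
        have "(\<Sum>i0<n. \<Sum>a<k. Bf n m (Cc \<phi> n) (zs a) (\<lambda>i j. cnj (Km $$ (c*n+i0, a*n+i)) * ev i0 j) (xs c))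
            = (\<Sum>a<k. \<Sum>i0<n. Bf n m (Cc \<phi> n) (zs a) (\<lambda>i j. cnj (Km $$ (c*n+i0, a*n+i)) * ev i0 j) (xs c))" for c
          by (rule sum.swap)
        also have "\<dots> c = (\<Sum>a<k. Bf n m (Cc \<phi> n) (zs a) (\<lambda>i j. cnj (Km $$ (c*n+j, a*n+i))) (xs c))" for c
          unfolding Bf_sum[OF finite_lessThan] by (intro sum.cong refl Bf_cong) (simp add: ev_sum2')
        finally have "(\<Sum>c<k. \<Sum>i0<n. \<Sum>a<k. Bf n m (Cc \<phi> n) (zs a) (\<lambda>i j. cnj (Km $$ (c*n+i0, a*n+i)) * ev i0 j) (xs c))
           = (\<Sum>c<k. \<Sum>a<k. Bf n m (Cc \<phi> n) (zs a) (\<lambda>i j. cnj (Km $$ (c*n+j, a*n+i))) (xs c))" by simp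
        also have "\<dots> = (\<Sum>a<k. \<Sum>c<k. Bf n m (Cc \<phi> n) (zs a) (\<lambda>i j. cnj (Km $$ (c*n+j, a*n+i))) (xs c))"
          by (rule sum.swap)
        finally show ?thesis unfolding B21 .
      qed
      have P4: "(\<Sum>c<k. \<Sum>i0<n. \<Sum>a<k. \<Sum>b<k. Bf n m (Cc \<phi> n) (zs a) (\<lambda>i j. cnj (Km $$ (c*n+i0, a*n+i)) * Km $$ (c*n+i0, b*n+j)) (zs b)) = Q22"
      proof -
        define f where "f c i0 a b = Bf n m (Cc \<phi> n) (zs a) (\<lambda>i j. cnj (Km $$ (c*n+i0, a*n+i)) * Km $$ (c*n+i0, b*n+j)) (zs b)" for c i0 a b
        have "(\<Sum>c<k. \<Sum>i0<n. \<Sum>a<k. \<Sum>b<k. f c i0 a b) = (\<Sum>c<k. \<Sum>a<k. \<Sum>i0<n. \<Sum>b<k. f c i0 a b)"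
          by (rule sum.cong[OF refl], rule sum.swap)
        also have "\<dots> = (\<Sum>c<k. \<Sum>a<k. \<Sum>b<k. \<Sum>i0<n. f c i0 a b)"
          by (rule sum.cong[OF refl], rule sum.cong[OF refl], rule sum.swap)
        also have "\<dots> = (\<Sum>a<k. \<Sum>c<k. \<Sum>b<k. \<Sum>i0<n. f c i0 a b)"
          by (rule sum.swap)
        also have "\<dots> = (\<Sum>a<k. \<Sum>b<k. \<Sum>c<k. \<Sum>i0<n. f c i0 a b)"
          by (rule sum.cong[OF refl], rule sum.swap)
        also have "\<dots> = Q22"
          unfolding B22 f_def Bf_sum[OF finite_lessThan]
          by (intro sum.cong refl Bf_cong) (simp add: cadj_mult_entry[OF Km])
        finally show ?thesis unfolding f_def .
      qed
      have QT: "Q = (\<Sum>c<k. \<Sum>i0<n. T c i0)"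
        unfolding Qsplit Tsplit sum.distrib P1 P2 P3 P4 by (simp add: ac_simps)
      show "Q \<in> \<real>" unfolding QT using Tpos by (intro sum_in_Reals) auto
      show "0 \<le> Re Q" unfolding QT Re_sum using Tpos by (intro sum_nonneg) auto
    qed
  qed
  then show "psd (2*(k*m)) (four_block_mat (ampl k n m \<phi> (1\<^sub>m (k*n))) (ampl k n m \<phi> Km) (cadj (ampl k n m \<phi> Km)) (ampl k n m \<phi> (cadj Km * Km)))"
    unfolding F_def .
qed

end
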